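(* Let $I$ be a quasiconcave function and put $\widetilde I(t)=t/I(t)$. Then (i) $T_I$ is bounded on $m_{\widetilde I}$, i.e. $\|T_If\|_{m_{\widetilde I}}\lesssim\|f\|_{m_{\widetilde I}}$ for $f\in\mathcal M_+(0,1)$; (ii) $T_I$ is bounded on $L^1$ if and only if $\int_0^t\frac{I(s)}{s}ds\lesssim I(t)$ for $t\in(0,1)$.
   Context: A quasiconcave function is a nondecreasing bijection $I:(0,1)\to(0,1)$ with $I(0+)=0$, $I(1-)=1$ and $t\mapsto I(t)/t$ nonincreasing. $\mathcal M_+(0,1)$: nonnegative measurable functions on $(0,1)$; $f^*$: nonincreasing rearrangement. $T_If(t)=\frac{I(t)}{t}\sup_{t\le s<1}\frac{s}{I(s)}f^*(s)$. For a nondecreasing $J$, $\|f\|_{m_J}=\sup_{0<t<1}J(t)f^*(t)$. $A\lesssim B$ means $A\le CB$ with $C$ independent of $f$ and $t$. *)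

theory Defs
  imports "HOL-Analysis.Analysis"
begin

definition quasiconcave :: "(real \<Rightarrow> real) \<Rightarrow> bool" where
  "quasiconcave I \<longleftrightarrow>
     bij_betw I {0<..<1} {0<..<1} \<and>
     mono_on {0<..<1} I \<and>
     (I \<longlongrightarrow> 0) (at_right 0) \<and>
     (I \<longlongrightarrow> 1) (at_left 1) \<and>
     (\<forall>s t. 0 < s \<and> s \<le> t \<and> t < 1 \<longrightarrow> I t / t \<le> I s / s)"

text \<open>Nonnegative measurable functions on (0,1) (values in [0,\<infinity>]); only the values on (0,1) matter.\<close>
definition Mplus :: "(real \<Rightarrow> ennreal) set" where
  "Mplus = borel_measurable lebesgue"

definition distf :: "(real \<Rightarrow> ennreal) \<Rightarrow> ennreal \<Rightarrow> ennreal" where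
  "distf f s = emeasure lebesgue {x \<in> {0<..<1}. s < f x}"

definition rearr :: "(real \<Rightarrow> ennreal) \<Rightarrow> real \<Rightarrow> ennreal" where
  "rearr f t = Inf {s. distf f s \<le> ennreal t}"

definition T_op :: "(real \<Rightarrow> real) \<Rightarrow> (real \<Rightarrow> ennreal) \<Rightarrow> real \<Rightarrow> ennreal" where
  "T_op I f t = ennreal (I t / t) * (SUP s\<in>{t..<1}. ennreal (s / I s) * rearr f s)"

definition m_norm :: "(real \<Rightarrow> real) \<Rightarrow> (real \<Rightarrow> ennreal) \<Rightarrow> ennreal" where
  "m_norm J f = (SUP t\<in>{0<..<1}. ennreal (J t) * rearr f t)"

definition L1_norm :: "(real \<Rightarrow> ennreal) \<Rightarrow> ennreal" where
  "L1_norm f = (\<integral>\<^sup>+ x \<in> {0<..<1}. f x \<partial>lebesgue)"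

end

theory Submission
  imports Defs
begin


lemma sigma_finite_lebesgue: "sigma_finite_measure (lebesgue :: real measure)"
proof
  show "\<exists>A::real set set. countable A \<and> A \<subseteq> sets lebesgue \<and> \<Union>A = space lebesgue \<and> (\<forall>a\<in>A. emeasure lebesgue a \<noteq> \<infinity>)"
  proof (intro exI[of _ "range (\<lambda>n::nat. {-real n..real n})"] conjI)
    show "\<Union>(range (\<lambda>n::nat. {-real n..real n})) = space lebesgue"
    proof (auto)
      fix x :: real
      obtain n :: nat where "\<bar>x\<bar> \<le> real n" using real_arch_simple by blast
      then show "\<exists>n. - real n \<le> x \<and> x \<le> real n" by (intro exI[of _ n]) auto
    qed
  qed (auto simp: emeasure_lborel_Icc_eq)
qed

lemma emeasure_lborel_layer:
  "emeasure lborel {s::real. 0 \<le> s \<and> ennreal s < c} = c"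
proof (cases c)
  case (real r)
  then have "{s::real. 0 \<le> s \<and> ennreal s < c} = {0..<r}"
    by (auto simp: ennreal_less_iff)
  then show ?thesis using real by simp
next
  case top
  then have e: "{s::real. 0 \<le> s \<and> ennreal s < c} = {0..}" by auto
  have "emeasure lborel {0::real..} = \<infinity>"
  proof (rule ccontr)
    assume "emeasure lborel {0::real..} \<noteq> \<infinity>"
    then obtain r where r: "emeasure lborel {0::real..} = ennreal r" "0 \<le> r"
      by (cases "emeasure lborel {0::real..}") auto
    have "emeasure lborel {0::real..r+1} \<le> emeasure lborel {0::real..}"
      by (rule emeasure_mono) auto
    then show False using r by (simp add: ennreal_le_iff)
  qed
  then show ?thesis using top e by simp
qed

lemma layer_cake:
  assumes "sigma_finite_measure M" and f[measurable]: "f \<in> borel_measurable M"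
  shows "(\<integral>\<^sup>+x. f x \<partial>M) = (\<integral>\<^sup>+s. indicator {0..} s * emeasure M {x\<in>space M. ennreal s < f x} \<partial>lborel)"
proof -
  interpret M: sigma_finite_measure M by fact
  interpret P: pair_sigma_finite M lborel ..
  have "(\<integral>\<^sup>+x. f x \<partial>M) = (\<integral>\<^sup>+x. (\<integral>\<^sup>+s. indicator {s. 0 \<le> s \<and> ennreal s < f x} s \<partial>lborel) \<partial>M)"
    by (rule nn_integral_cong) (simp add: emeasure_lborel_layer)
  also have "\<dots> = (\<integral>\<^sup>+s. (\<integral>\<^sup>+x. indicator {s. 0 \<le> s \<and> ennreal s < f x} s \<partial>M) \<partial>lborel)"
    by (rule P.Fubini'[symmetric]) measurable
  also have "\<dots> = (\<integral>\<^sup>+s. indicator {0..} s * emeasure M {x\<in>space M. ennreal s < f x} \<partial>lborel)"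
  proof (rule nn_integral_cong)
    fix s :: real
    have "(\<integral>\<^sup>+x. indicator {s. 0 \<le> s \<and> ennreal s < f x} s \<partial>M) = (\<integral>\<^sup>+x. indicator {0..} s * indicator {x\<in>space M. ennreal s < f x} x \<partial>M)"
      by (rule nn_integral_cong) (auto simp: indicator_def)
    also have "\<dots> = indicator {0..} s * emeasure M {x\<in>space M. ennreal s < f x}"
      by (subst nn_integral_cmult) auto
    finally show "(\<integral>\<^sup>+x. indicator {s. 0 \<le> s \<and> ennreal s < f x} s \<partial>M) = indicator {0..} s * emeasure M {x\<in>space M. ennreal s < f x}" .
  qed
  finally show ?thesis .
qed

lemma rearr_antimono: "t \<le> t' \<Longrightarrow> rearr f t' \<le> rearr f t"
  unfolding rearr_def
  by (rule Inf_superset_mono) (auto intro: order_trans ennreal_leI)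

lemma rearr_le: "distf f y \<le> ennreal t \<Longrightarrow> rearr f t \<le> y"
  unfolding rearr_def by (auto intro: Inf_lower)

lemma rearr_meas: "rearr f \<in> borel_measurable borel"
proof (rule borel_measurableI_greater)
  fix y
  have "is_interval {x. y < rearr f x}"
    unfolding is_interval_1
  proof (intro ballI allI impI)
    fix a b x assume "a \<in> {x. y < rearr f x}" "b \<in> {x. y < rearr f x}" "a \<le> x \<and> x \<le> b"
    then show "x \<in> {x. y < rearr f x}" using rearr_antimono[of x b f] by auto
  qed
  then show "{x \<in> space borel. y < rearr f x} \<in> sets borel"
    using real_interval_borel_measurable by simp
qed

lemma ind_less_iff: "(ennreal s < g x * indicator A x) \<longleftrightarrow> (x \<in> A \<and> ennreal s < g x)"
  by (auto simp: indicator_def)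

lemma int_rearr_le:
  assumes f: "f \<in> Mplus"
  shows "(\<integral>\<^sup>+t\<in>{0<..<1}. rearr f t \<partial>lborel) \<le> (\<integral>\<^sup>+x\<in>{0<..<1::real}. f x \<partial>lebesgue)"
proof -
  have fm[measurable]: "f \<in> borel_measurable lebesgue" using f by (simp add: Mplus_def)
  have rm[measurable]: "rearr f \<in> borel_measurable lborel" using rearr_meas by simp
  have "(\<integral>\<^sup>+t\<in>{0<..<1}. rearr f t \<partial>lborel) =
     (\<integral>\<^sup>+s. indicator {0..} s * emeasure lborel {t\<in>space lborel. ennreal s < rearr f t * indicator {0<..<1} t} \<partial>lborel)"
    by (rule layer_cake) (auto simp: sigma_finite_lborel)
  also have "\<dots> \<le> (\<integral>\<^sup>+s. indicator {0..} s * emeasure lebesgue {x\<in>space lebesgue. ennreal s < f x * indicator {0<..<1} x} \<partial>lborel)"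
  proof (rule nn_integral_mono)
    fix s :: real
    have "emeasure lborel {t\<in>space lborel. ennreal s < rearr f t * indicator {0<..<1} t} \<le> distf f (ennreal s)"
    proof (cases "distf f (ennreal s)")
      case (real d)
      have sub: "{t\<in>space lborel. ennreal s < rearr f t * indicator {0<..<1} t} \<subseteq> {0<..<d}"
      proof (clarsimp simp: ind_less_iff)
        fix t :: real assume t: "0 < t" "t < 1" "ennreal s < rearr f t"
        have "\<not> distf f (ennreal s) \<le> ennreal t"
          using rearr_le[of f "ennreal s" t] t(3) by auto
        then show "t < d" using real t by (auto simp: ennreal_le_iff)
      qed
      have "emeasure lborel {t\<in>space lborel. ennreal s < rearr f t * indicator {0<..<1} t} \<le> emeasure lborel {0<..<d}"
        by (rule emeasure_mono[OF sub]) auto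
      also have "\<dots> \<le> distf f (ennreal s)" using real by simp
      finally show ?thesis .
    qed simp
    also have "distf f (ennreal s) = emeasure lebesgue {x\<in>space lebesgue. ennreal s < f x * indicator {0<..<1} x}"
      unfolding distf_def by (rule arg_cong[where f="emeasure lebesgue"]) (auto simp: ind_less_iff)
    finally show "indicator {0..} s * emeasure lborel {t\<in>space lborel. ennreal s < rearr f t * indicator {0<..<1} t} \<le> indicator {0..} s * emeasure lebesgue {x\<in>space lebesgue. ennreal s < f x * indicator {0<..<1} x}"
      by (rule mult_left_mono) simp
  qed
  also have "\<dots> = (\<integral>\<^sup>+x\<in>{0<..<1::real}. f x \<partial>lebesgue)"
  proof (rule layer_cake[symmetric])
    show "(\<lambda>x. f x * indicator {0<..<1} x) \<in> borel_measurable lebesgue"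
      by (intro borel_measurable_times_ennreal fm borel_measurable_indicator) simp
  qed (simp add: sigma_finite_lebesgue)
  finally show ?thesis .
qed

lemma qc_pos: "quasiconcave I \<Longrightarrow> t \<in> {0<..<1} \<Longrightarrow> 0 < I t \<and> I t < 1"
  unfolding quasiconcave_def using bij_betwE by fastforce

lemma qc_mono: "quasiconcave I \<Longrightarrow> 0 < s \<Longrightarrow> s \<le> t \<Longrightarrow> t < 1 \<Longrightarrow> I s \<le> I t"
  unfolding quasiconcave_def by (auto intro: mono_onD)

lemma qc_ratio: "quasiconcave I \<Longrightarrow> 0 < s \<Longrightarrow> s \<le> t \<Longrightarrow> t < 1 \<Longrightarrow> I t / t \<le> I s / s"
  unfolding quasiconcave_def by auto

lemma T_antimono:
  assumes "quasiconcave I" "0 < t" "t \<le> x" "x < 1"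
  shows "T_op I f x \<le> T_op I f t"
  unfolding T_op_def
proof (rule mult_mono)
  show "ennreal (I x / x) \<le> ennreal (I t / t)"
    using qc_ratio[OF assms] by (rule ennreal_leI)
  show "(SUP s\<in>{x..<1}. ennreal (s / I s) * rearr f s) \<le> (SUP s\<in>{t..<1}. ennreal (s / I s) * rearr f s)"
    by (rule SUP_subset_mono) (use assms in auto)
qed auto

lemma rearr_T_le:
  assumes "quasiconcave I" "0 < t" "t < 1"
  shows "rearr (T_op I f) t \<le> T_op I f t"
proof (rule rearr_le)
  have "{x \<in> {0<..<1}. T_op I f t < T_op I f x} \<subseteq> {0<..<t}"
  proof clarsimp
    fix x :: real assume x: "0 < x" "x < 1" "T_op I f t < T_op I f x"
    show "x < t"
    proof (rule ccontr)
      assume "\<not> x < t"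
      then have "T_op I f x \<le> T_op I f t" using T_antimono[OF assms(1,2) _ x(2)] by simp
      then show False using x(3) by simp
    qed
  qed
  then have "distf (T_op I f) (T_op I f t) \<le> emeasure lebesgue {0<..<t}"
    unfolding distf_def by (rule emeasure_mono) simp
  also have "\<dots> = ennreal t" using assms by simp
  finally show "distf (T_op I f) (T_op I f t) \<le> ennreal t" .
qed

lemma part1:
  assumes "quasiconcave I"
  shows "m_norm (\<lambda>t. t / I t) (T_op I f) \<le> ennreal 1 * m_norm (\<lambda>t. t / I t) f"
proof -
  have "ennreal (t / I t) * rearr (T_op I f) t \<le> m_norm (\<lambda>t. t / I t) f" if t: "t \<in> {0<..<1}" for t
  proof -
    have It: "0 < I t" using qc_pos[OF assms t] by simp
    have "ennreal (t / I t) * rearr (T_op I f) t \<le> ennreal (t / I t) * T_op I f t"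
      by (rule mult_left_mono) (use rearr_T_le[OF assms] t in auto)
    also have "\<dots> = (ennreal (t / I t) * ennreal (I t / t)) * (SUP s\<in>{t..<1}. ennreal (s / I s) * rearr f s)"
      unfolding T_op_def by (simp add: mult.assoc)
    also have "ennreal (t / I t) * ennreal (I t / t) = 1"
      using It t by (simp add: ennreal_mult''[symmetric] del: ennreal_mult'')
    also have "1 * (SUP s\<in>{t..<1}. ennreal (s / I s) * rearr f s) \<le> m_norm (\<lambda>t. t / I t) f"
      unfolding m_norm_def by (simp, rule SUP_subset_mono) (use t in auto)
    finally show ?thesis .
  qed
  then show ?thesis unfolding m_norm_def[of _ "T_op I f"] by (simp, intro SUP_least) auto
qed

definition Ic :: "(real \<Rightarrow> real) \<Rightarrow> real \<Rightarrow> real" where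
  "Ic I t = (if t \<in> {0<..<1} then I t else 0)"

lemma Ic_meas[measurable]:
  assumes "quasiconcave I"
  shows "Ic I \<in> borel_measurable borel"
proof -
  have "mono_on {0<..<1} I" using assms unfolding quasiconcave_def by auto
  then have "I \<in> borel_measurable (restrict_space borel {0<..<1})"
    by (rule borel_measurable_mono_on_fnc)
  then have "(\<lambda>x. indicator {0<..<1} x *\<^sub>R I x) \<in> borel_measurable borel"
    by (subst (asm) borel_measurable_restrict_space_iff) auto
  also have "(\<lambda>x. indicator {0<..<1} x *\<^sub>R I x) = Ic I"
    by (auto simp: Ic_def indicator_def fun_eq_iff)
  finally show ?thesis .
qed

lemma part2a:
  assumes qc: "quasiconcave I"
    and C0: "\<forall>f\<in>Mplus. L1_norm (T_op I f) \<le> ennreal C0 * L1_norm f"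
  shows "\<exists>C::real. \<forall>t\<in>{0<..<1}.
               (\<integral>\<^sup>+ s \<in> {0<..<t}. ennreal (I s / s) \<partial>lebesgue) \<le> ennreal C * ennreal (I t)"
proof -
  define C where "C = max C0 0"
  have C: "\<forall>f\<in>Mplus. L1_norm (T_op I f) \<le> ennreal C * L1_norm f" "C \<ge> 0"
  proof -
    show "C \<ge> 0" by (simp add: C_def)
    have "ennreal C0 \<le> ennreal C" by (rule ennreal_leI) (simp add: C_def)
    then show "\<forall>f\<in>Mplus. L1_norm (T_op I f) \<le> ennreal C * L1_norm f"
      using C0 by (meson mult_right_mono order_trans zero_le)
  qed
  show ?thesis
  proof (intro exI[of _ "2 * C"] ballI)
    fix a :: real assume a: "a \<in> {0<..<1}"
    have Ia: "0 < I a" using qc_pos[OF qc a] by simp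
    define b where "b = min 1 (2 * a)"
    have b: "a < b" "b \<le> 1" "b \<le> 2 * a" using a by (auto simp: b_def)
    define f :: "real \<Rightarrow> ennreal" where "f = indicator {0<..<b}"
    have fM: "f \<in> Mplus" unfolding Mplus_def f_def
      by (rule borel_measurable_indicator) simp
    have L1f: "L1_norm f = ennreal b"
    proof -
      have "L1_norm f = (\<integral>\<^sup>+x. indicator {0<..<b} x \<partial>lborel)"
        unfolding L1_norm_def f_def nn_integral_completion
        by (rule nn_integral_cong) (use b in \<open>auto simp: indicator_def\<close>)
      then show ?thesis using b a by simp
    qed
    have rf: "1 \<le> rearr f a"
      unfolding rearr_def
    proof (rule Inf_greatest, clarsimp)
      fix s assume s: "distf f s \<le> ennreal a"
      show "1 \<le> s"
      proof (rule ccontr)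
        assume "\<not> 1 \<le> s"
        then have "s < 1" by simp
        then have "{x \<in> {0<..<1}. s < f x} = {0<..<b}"
          using b by (auto simp: f_def indicator_def)
        then have "distf f s = ennreal b" using b a by (simp add: distf_def)
        then show False using s b a by (simp add: ennreal_le_iff)
      qed
    qed
    have Tlow: "ennreal (a / I a) * (ennreal (Ic I t / t) * indicator {0<..<a} t) \<le> T_op I f t * indicator {0<..<1} t" for t
    proof (cases "t \<in> {0<..<a}")
      case True
      then have t1: "t \<in> {0<..<1}" using a by auto
      have "ennreal (a / I a) * (ennreal (Ic I t / t) * indicator {0<..<a} t) = ennreal (I t / t) * (ennreal (a / I a) * 1)"
        using True t1 by (simp add: Ic_def mult_ac)
      also have "\<dots> \<le> ennreal (I t / t) * (ennreal (a / I a) * rearr f a)"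
        by (intro mult_left_mono rf) auto
      also have "\<dots> \<le> T_op I f t"
        unfolding T_op_def by (rule mult_left_mono, rule SUP_upper) (use True a in auto)
      finally show ?thesis using t1 by simp
    qed simp
    have "ennreal (a / I a) * (\<integral>\<^sup>+t. ennreal (Ic I t / t) * indicator {0<..<a} t \<partial>lborel)
        = (\<integral>\<^sup>+t. ennreal (a / I a) * (ennreal (Ic I t / t) * indicator {0<..<a} t) \<partial>lborel)"
      by (rule nn_integral_cmult[symmetric]) (use qc in measurable)
    also have "\<dots> \<le> L1_norm (T_op I f)"
      unfolding L1_norm_def nn_integral_completion by (rule nn_integral_mono) (rule Tlow)
    also have "\<dots> \<le> ennreal C * ennreal b" using C(1)[rule_format, OF fM] L1f by simp
    also have "\<dots> \<le> ennreal C * ennreal (2 * a)"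
      by (intro mult_left_mono ennreal_leI b) auto
    finally have main: "ennreal (a / I a) * (\<integral>\<^sup>+t. ennreal (Ic I t / t) * indicator {0<..<a} t \<partial>lborel) \<le> ennreal C * ennreal (2 * a)" .
    have eq: "(\<integral>\<^sup>+ s \<in> {0<..<a}. ennreal (I s / s) \<partial>lebesgue) = (\<integral>\<^sup>+t. ennreal (Ic I t / t) * indicator {0<..<a} t \<partial>lborel)"
      unfolding nn_integral_completion
      by (rule nn_integral_cong) (use a in \<open>auto simp: Ic_def indicator_def\<close>)
    have "(\<integral>\<^sup>+t. ennreal (Ic I t / t) * indicator {0<..<a} t \<partial>lborel)
       = ennreal (I a / a) * (ennreal (a / I a) * (\<integral>\<^sup>+t. ennreal (Ic I t / t) * indicator {0<..<a} t \<partial>lborel))"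
      using Ia a by (simp add: mult.assoc[symmetric] ennreal_mult''[symmetric] del: ennreal_mult'')
    also have "\<dots> \<le> ennreal (I a / a) * (ennreal C * ennreal (2 * a))"
      by (rule mult_left_mono[OF main]) simp
    also have "\<dots> = ennreal (2 * C) * ennreal (I a)"
      using Ia a C(2) by (simp add: ennreal_mult''[symmetric] ennreal_mult[symmetric] del: ennreal_mult'')
    finally show "(\<integral>\<^sup>+ s \<in> {0<..<a}. ennreal (I s / s) \<partial>lebesgue) \<le> ennreal (2 * C) * ennreal (I a)"
      using eq by simp
  qed
qed

lemma T_pointwise:
  assumes qc: "quasiconcave I" and t: "0 < t" "t < 1"
  shows "T_op I f t \<le> rearr f t + ennreal (I t / t) *
     (\<integral>\<^sup>+r. (if t < r \<and> r < 1 then rearr f r * ennreal (1 / Ic I r) else 0) \<partial>lborel)"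
    (is "_ \<le> _ + _ * ?K")
proof -
  have It: "0 < I t" using qc_pos[OF qc] t by simp
  have rm[measurable]: "rearr f \<in> borel_measurable lborel" using rearr_meas by simp
  have Im[measurable]: "Ic I \<in> borel_measurable lborel" using Ic_meas[OF qc] by simp
  have bound: "ennreal (s / I s) * rearr f s \<le> ennreal (t / I t) * rearr f t + ?K" if s: "t \<le> s" "s < 1" for s
  proof -
    have Is: "0 < I s" "I t \<le> I s" using qc_pos[OF qc] qc_mono[OF qc t(1) s] s t by auto
    have "ennreal (s / I s) * rearr f s = ennreal (t / I s) * rearr f s + ennreal ((s - t) / I s) * rearr f s"
    proof -
      have "ennreal (s / I s) = ennreal (t / I s) + ennreal ((s - t) / I s)"
        using Is s t by (subst ennreal_plus[symmetric]) (auto simp: diff_divide_distrib divide_right_mono)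
      then show ?thesis by (simp add: distrib_right)
    qed
    also have "ennreal (t / I s) * rearr f s \<le> ennreal (t / I t) * rearr f t"
    proof (rule mult_mono)
      show "ennreal (t / I s) \<le> ennreal (t / I t)"
        by (rule ennreal_leI, rule divide_left_mono) (use Is It t in auto)
      show "rearr f s \<le> rearr f t" by (rule rearr_antimono) fact
    qed auto
    also have "ennreal ((s - t) / I s) * rearr f s = (\<integral>\<^sup>+r. (ennreal (1 / I s) * rearr f s) * indicator {t<..<s} r \<partial>lborel)"
    proof -
      have "ennreal ((s - t) / I s) = ennreal (1 / I s) * ennreal (s - t)"
        using s Is by (simp add: ennreal_mult''[symmetric] del: ennreal_mult'')
      then show ?thesis using s by (subst nn_integral_cmult_indicator) (auto simp: mult_ac)
    qed
    also have "\<dots> \<le> ?K"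
    proof (rule nn_integral_mono)
      fix r
      show "(ennreal (1 / I s) * rearr f s) * indicator {t<..<s} r \<le> (if t < r \<and> r < 1 then rearr f r * ennreal (1 / Ic I r) else 0)"
      proof (cases "r \<in> {t<..<s}")
        case True
        then have r: "t < r" "r < s" "r < 1" "0 < r" using s t by auto
        have Ir: "0 < I r" "I r \<le> I s" using qc_pos[OF qc, of r] qc_mono[OF qc r(4), of s] r s by auto
        have "ennreal (1 / I s) * rearr f s \<le> ennreal (1 / I r) * rearr f r"
        proof (rule mult_mono)
          show "ennreal (1 / I s) \<le> ennreal (1 / I r)"
            by (rule ennreal_leI, rule divide_left_mono) (use Ir in auto)
          show "rearr f s \<le> rearr f r" by (rule rearr_antimono) (use r in auto)
        qed auto
        then show ?thesis using True r by (simp add: Ic_def mult.commute)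
      qed simp
    qed
    finally show ?thesis by (simp add: add_mono)
  qed
  have "T_op I f t \<le> ennreal (I t / t) * (ennreal (t / I t) * rearr f t + ?K)"
    unfolding T_op_def by (rule mult_left_mono, rule SUP_least) (use bound in auto)
  also have "\<dots> = (ennreal (I t / t) * ennreal (t / I t)) * rearr f t + ennreal (I t / t) * ?K"
    by (simp add: distrib_left mult.assoc)
  also have "ennreal (I t / t) * ennreal (t / I t) = 1"
    using It t by (simp add: ennreal_mult''[symmetric] del: ennreal_mult'')
  finally show ?thesis by simp
qed

lemma part2b:
  assumes qc: "quasiconcave I"
    and hyp0: "\<forall>t\<in>{0<..<1}. (\<integral>\<^sup>+ s \<in> {0<..<t}. ennreal (I s / s) \<partial>lebesgue) \<le> ennreal C0 * ennreal (I t)"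
  shows "\<exists>C::real. \<forall>f\<in>Mplus. L1_norm (T_op I f) \<le> ennreal C * L1_norm f"
proof -
  define C where "C = max C0 0"
  have C0C: "ennreal C0 \<le> ennreal C" by (rule ennreal_leI) (simp add: C_def)
  have Cpos: "0 \<le> C" by (simp add: C_def)
  have hyp: "(\<integral>\<^sup>+t. ennreal (Ic I t / t) * indicator {0<..<r} t \<partial>lborel) \<le> ennreal C * ennreal (I r)"
    if r: "r \<in> {0<..<1}" for r
  proof -
    have "(\<integral>\<^sup>+t. ennreal (Ic I t / t) * indicator {0<..<r} t \<partial>lborel) = (\<integral>\<^sup>+ s \<in> {0<..<r}. ennreal (I s / s) \<partial>lebesgue)"
      unfolding nn_integral_completion
      by (rule nn_integral_cong) (use r in \<open>auto simp: Ic_def indicator_def\<close>)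
    also have "\<dots> \<le> ennreal C0 * ennreal (I r)" using hyp0 r by blast
    also have "\<dots> \<le> ennreal C * ennreal (I r)" by (rule mult_right_mono[OF C0C]) simp
    finally show ?thesis .
  qed
  show ?thesis
  proof (intro exI[of _ "1 + C"] ballI)
    fix f assume fM: "f \<in> Mplus"
    define g where "g = rearr f"
    have gm[measurable]: "g \<in> borel_measurable borel" unfolding g_def by (rule rearr_meas)
    have Im[measurable]: "Ic I \<in> borel_measurable borel" using Ic_meas[OF qc] by simp
    define K where "K t = (\<integral>\<^sup>+r. (if t < r \<and> r < 1 then g r * ennreal (1 / Ic I r) else 0) \<partial>lborel)" for t
    define G where "G t r = (if 0 < t \<and> t < r \<and> r < 1 then ennreal (Ic I t / t) * (g r * ennreal (1 / Ic I r)) else 0)" for t r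
    have Gm[measurable]: "case_prod G \<in> borel_measurable (lborel \<Otimes>\<^sub>M lborel)"
      unfolding G_def by measurable
    have Km[measurable]: "K \<in> borel_measurable lborel"
      unfolding K_def by measurable
    have "L1_norm (T_op I f) = (\<integral>\<^sup>+t. T_op I f t * indicator {0<..<1} t \<partial>lborel)"
      unfolding L1_norm_def nn_integral_completion ..
    also have "\<dots> \<le> (\<integral>\<^sup>+t. g t * indicator {0<..<1} t + ennreal (Ic I t / t) * indicator {0<..<1} t * K t \<partial>lborel)"
    proof (rule nn_integral_mono)
      fix t
      show "T_op I f t * indicator {0<..<1} t \<le> g t * indicator {0<..<1} t + ennreal (Ic I t / t) * indicator {0<..<1} t * K t"
      proof (cases "t \<in> {0<..<1}")
        case True
        then show ?thesis using T_pointwise[OF qc, of t f] unfolding g_def K_def by (simp add: Ic_def)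
      qed simp
    qed
    also have "\<dots> = (\<integral>\<^sup>+t. g t * indicator {0<..<1} t \<partial>lborel) + (\<integral>\<^sup>+t. ennreal (Ic I t / t) * indicator {0<..<1} t * K t \<partial>lborel)"
      by (rule nn_integral_add) measurable
    also have "(\<integral>\<^sup>+t. ennreal (Ic I t / t) * indicator {0<..<1} t * K t \<partial>lborel) = (\<integral>\<^sup>+t. (\<integral>\<^sup>+r. G t r \<partial>lborel) \<partial>lborel)"
    proof (rule nn_integral_cong)
      fix t
      have "ennreal (Ic I t / t) * indicator {0<..<1} t * K t = (\<integral>\<^sup>+r. (ennreal (Ic I t / t) * indicator {0<..<1} t) * (if t < r \<and> r < 1 then g r * ennreal (1 / Ic I r) else 0) \<partial>lborel)"
        unfolding K_def by (rule nn_integral_cmult[symmetric]) measurable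
      also have "\<dots> = (\<integral>\<^sup>+r. G t r \<partial>lborel)"
        by (rule nn_integral_cong) (auto simp: G_def indicator_def)
      finally show "ennreal (Ic I t / t) * indicator {0<..<1} t * K t = (\<integral>\<^sup>+r. G t r \<partial>lborel)" .
    qed
    also have "\<dots> = (\<integral>\<^sup>+r. (\<integral>\<^sup>+t. G t r \<partial>lborel) \<partial>lborel)"
      by (rule lborel_pair.Fubini'[symmetric]) (rule Gm)
    also have "\<dots> \<le> (\<integral>\<^sup>+r. ennreal C * (g r * indicator {0<..<1} r) \<partial>lborel)"
    proof (rule nn_integral_mono)
      fix r
      show "(\<integral>\<^sup>+t. G t r \<partial>lborel) \<le> ennreal C * (g r * indicator {0<..<1} r)"
      proof (cases "r \<in> {0<..<1}")
        case True
        have Ir: "0 < I r" using qc_pos[OF qc True] by simp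
        have "(\<integral>\<^sup>+t. G t r \<partial>lborel) = (\<integral>\<^sup>+t. (g r * ennreal (1 / I r)) * (ennreal (Ic I t / t) * indicator {0<..<r} t) \<partial>lborel)"
          by (rule nn_integral_cong) (use True in \<open>auto simp: G_def Ic_def indicator_def mult_ac\<close>)
        also have "\<dots> = (g r * ennreal (1 / I r)) * (\<integral>\<^sup>+t. ennreal (Ic I t / t) * indicator {0<..<r} t \<partial>lborel)"
          by (rule nn_integral_cmult) measurable
        also have "\<dots> \<le> (g r * ennreal (1 / I r)) * (ennreal C * ennreal (I r))"
          by (rule mult_left_mono[OF hyp[OF True]]) simp
        also have "\<dots> = ennreal C * g r * (ennreal (1 / I r) * ennreal (I r))"
          by (simp add: mult_ac)
        also have "ennreal (1 / I r) * ennreal (I r) = 1"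
          using Ir by (simp add: ennreal_mult''[symmetric] del: ennreal_mult'')
        finally show ?thesis using True by (simp add: mult_ac)
      next
        case False
        then have "G t r = 0" for t by (auto simp: G_def)
        then show ?thesis by simp
      qed
    qed
    also have "\<dots> = ennreal C * (\<integral>\<^sup>+r. g r * indicator {0<..<1} r \<partial>lborel)"
      by (rule nn_integral_cmult) measurable
    finally have "L1_norm (T_op I f) \<le> (1 + ennreal C) * (\<integral>\<^sup>+t. g t * indicator {0<..<1} t \<partial>lborel)"
      by (simp add: distrib_right)
    also have "\<dots> \<le> (1 + ennreal C) * L1_norm f"
      by (rule mult_left_mono) (use int_rearr_le[OF fM] in \<open>auto simp: g_def L1_norm_def\<close>)
    also have "(1 + ennreal C) = ennreal (1 + C)" using Cpos by (simp add: ennreal_plus)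
    finally show "L1_norm (T_op I f) \<le> ennreal (1 + C) * L1_norm f" .
  qed
qed


theorem theorem3p5:
  fixes I :: "real \<Rightarrow> real"
  assumes "quasiconcave I"
  shows "(\<exists>C::real. \<forall>f\<in>Mplus.
           m_norm (\<lambda>t. t / I t) (T_op I f) \<le> ennreal C * m_norm (\<lambda>t. t / I t) f)
    \<and> ((\<exists>C::real. \<forall>f\<in>Mplus. L1_norm (T_op I f) \<le> ennreal C * L1_norm f)
         \<longleftrightarrow> (\<exists>C::real. \<forall>t\<in>{0<..<1}.
               (\<integral>\<^sup>+ s \<in> {0<..<t}. ennreal (I s / s) \<partial>lebesgue) \<le> ennreal C * ennreal (I t)))"
proof (intro conjI iffI)
  show "\<exists>C::real. \<forall>f\<in>Mplus. m_norm (\<lambda>t. t / I t) (T_op I f) \<le> ennreal C * m_norm (\<lambda>t. t / I t) f"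
    by (intro exI[of _ 1] ballI part1[OF assms])
next
  assume "\<exists>C::real. \<forall>f\<in>Mplus. L1_norm (T_op I f) \<le> ennreal C * L1_norm f"
  then obtain C where "\<forall>f\<in>Mplus. L1_norm (T_op I f) \<le> ennreal C * L1_norm f" by blast
  then show "\<exists>C::real. \<forall>t\<in>{0<..<1}. (\<integral>\<^sup>+ s \<in> {0<..<t}. ennreal (I s / s) \<partial>lebesgue) \<le> ennreal C * ennreal (I t)"
    by (rule part2a[OF assms])
next
  assume "\<exists>C::real. \<forall>t\<in>{0<..<1}. (\<integral>\<^sup>+ s \<in> {0<..<t}. ennreal (I s / s) \<partial>lebesgue) \<le> ennreal C * ennreal (I t)"
  then obtain C where "\<forall>t\<in>{0<..<1}. (\<integral>\<^sup>+ s \<in> {0<..<t}. ennreal (I s / s) \<partial>lebesgue) \<le> ennreal C * ennreal (I t)" by blast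
  then show "\<exists>C::real. \<forall>f\<in>Mplus. L1_norm (T_op I f) \<le> ennreal C * L1_norm f"
    by (rule part2b[OF assms])
qed

end
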